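(* Let $q_1,q_2$ be positive probability densities on $\mathbb{R}^d$ with unnormalized versions $\tilde q_i=Z_iq_i$ and $r=Z_1/Z_2$. Let $\{T_\phi:\phi\in\mathbb{R}^l\}$ be a family of smooth invertible maps $\mathbb{R}^d\to\mathbb{R}^d$ with smooth inverses, and for each $\phi$ let $q_1^{(\phi)}$ be the density of $T_\phi(\omega)$ for $\omega\sim q_1$, with unnormalized version $\tilde q_1^{(\phi)}(x)=\tilde q_1(T_\phi^{-1}(x))\,|\det J_{T_\phi^{-1}}(x)|$ (so $\tilde q_1^{(\phi)}=Z_1q_1^{(\phi)}$). Fix $n_1,n_2\ge1$, $n=n_1+n_2$, $s_i=n_i/n$. For $\tilde r>0$, $\phi\in\mathbb{R}^l$, define $$G_{s_2}(\tilde r,\phi)=1-\frac{1}{s_2}E_{q_1^{(\phi)}}\!\left[\left(\frac{s_2\tilde q_2(\omega)\tilde r}{s_1\tilde q_1^{(\phi)}(\omega)+s_2\tilde q_2(\omega)\tilde r}\right)^{2}\right]-\frac{1}{s_1}E_{q_2}\!\left[\left(\frac{s_1\tilde q_1^{(\phi)}(\omega)}{s_1\tilde q_1^{(\phi)}(\omega)+s_2\tilde q_2(\omega)\tilde r}\right)^{2}\right].$$ Suppose $(\tilde r^*,\phi^* )$ solves $\min_{\phi\in\mathbb{R}^l}\max_{\tilde r>0}G_{s_2}(\tilde r,\phi)$, i.e. $\phi^*$ minimizes $\phi\mapsto\sup_{\tilde r>0}G_{s_2}(\tilde r,\phi)$ and $\tilde r^*$ attains $\sup_{\tilde r>0}G_{s_2}(\tilde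 r,\phi^* )$. Then $\tilde r^*=r$, $G_{s_2}(\tilde r^*,\phi)=H_{s_2}(q_1^{(\phi)},q_2)$ for every $\phi\in\mathbb{R}^l$, and $\phi^*$ minimizes $\phi\mapsto H_{s_2}(q_1^{(\phi)},q_2)$ over $\mathbb{R}^l$. Consequently $\phi^*$ also minimizes over $\mathbb{R}^l$ the quantity $\frac{1}{ns_1s_2}\left[\left(1-H_{s_2}(q_1^{(\phi)},q_2)\right)^{-1}-1\right]$.
   Context: $H_\pi(p_1,p_2)=1-\int\left(\pi p_1^{-1}+(1-\pi)p_2^{-1}\right)^{-1}d\mu$ is the weighted harmonic divergence. For i.i.d. samples of sizes $n_1,n_2$ from $q_1^{(\phi)}$ and $q_2$, the quantity $\frac{1}{ns_1s_2}[(1-H_{s_2}(q_1^{(\phi)},q_2))^{-1}-1]$ is the first-order term of the asymptotic relative mean square error of the asymptotically optimal Bridge estimator of $r$ based on $\tilde q_1^{(\phi)},\tilde q_2$. *)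

theory Defs
  imports "HOL-Analysis.Analysis"
begin

definition dir_deriv :: "'a::real_normed_vector \<Rightarrow> ('a \<Rightarrow> real) \<Rightarrow> 'a \<Rightarrow> real" where
  "dir_deriv v g x = (THE D. ((\<lambda>t. g (x + t *\<^sub>R v)) has_real_derivative D) (at 0))"

fun iter_pd :: "'a::real_normed_vector list \<Rightarrow> ('a \<Rightarrow> real) \<Rightarrow> 'a \<Rightarrow> real" where
  "iter_pd [] g = g"
| "iter_pd (v # vs) g = dir_deriv v (iter_pd vs g)"

definition smooth_real :: "('a::euclidean_space \<Rightarrow> real) \<Rightarrow> bool" where
  "smooth_real g \<longleftrightarrow>
     (\<forall>vs. set vs \<subseteq> Basis \<longrightarrow>
        continuous_on UNIV (iter_pd vs g) \<and>
        (\<forall>v\<in>Basis. \<forall>x. ((\<lambda>t. iter_pd vs g (x + t *\<^sub>R v)) differentiable (at 0))))"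

definition smooth_map :: "('a::euclidean_space \<Rightarrow> 'b::euclidean_space) \<Rightarrow> bool" where
  "smooth_map f \<longleftrightarrow> (\<forall>b\<in>Basis. smooth_real (\<lambda>x. f x \<bullet> b))"

definition harmonic_div :: "real \<Rightarrow> ('a::euclidean_space \<Rightarrow> real) \<Rightarrow> ('a \<Rightarrow> real) \<Rightarrow> real" where
  "harmonic_div \<pi> p1 p2 =
     1 - (\<integral>x. inverse (\<pi> * inverse (p1 x) + (1 - \<pi>) * inverse (p2 x)) \<partial>lborel)"

text \<open>The objective G: p1, p2 normalized densities, tq1, tq2 unnormalized versions.\<close>
definition bridge_G :: "real \<Rightarrow> real \<Rightarrow> ('a::euclidean_space \<Rightarrow> real) \<Rightarrow> ('a \<Rightarrow> real)
    \<Rightarrow> ('a \<Rightarrow> real) \<Rightarrow> ('a \<Rightarrow> real) \<Rightarrow> real \<Rightarrow> real" where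
  "bridge_G s1 s2 p1 p2 tq1 tq2 rt =
     1 - (1 / s2) * (\<integral>x. p1 x * (s2 * tq2 x * rt / (s1 * tq1 x + s2 * tq2 x * rt))^2 \<partial>lborel)
       - (1 / s1) * (\<integral>x. p2 x * (s1 * tq1 x / (s1 * tq1 x + s2 * tq2 x * rt))^2 \<partial>lborel)"

end

theory Submission
  imports Defs
begin


lemma line_deriv_shift:
  fixes g :: "'a::real_normed_vector \<Rightarrow> real"
  assumes der: "\<And>y. ((\<lambda>t. g (y + t *\<^sub>R b)) has_real_derivative D y) (at 0)"
  shows "((\<lambda>t. g (y + t *\<^sub>R b)) has_real_derivative D (y + t0 *\<^sub>R b)) (at t0)"
proof -
  have "((\<lambda>s. g ((y + t0 *\<^sub>R b) + s *\<^sub>R b)) has_real_derivative D (y + t0 *\<^sub>R b)) (at 0)"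
    by (rule der)
  then have "((\<lambda>s. g (y + (s + t0) *\<^sub>R b)) has_real_derivative D (y + t0 *\<^sub>R b)) (at 0)"
    by (simp add: scaleR_add_left algebra_simps)
  then show ?thesis using DERIV_shift[where f="\<lambda>t. g (y + t *\<^sub>R b)" and x=0 and z=t0]
    by simp
qed

lemma line_mvt:
  fixes g :: "'a::real_normed_vector \<Rightarrow> real"
  assumes der: "\<And>y. ((\<lambda>t. g (y + t *\<^sub>R b)) has_real_derivative D y) (at 0)"
  shows "\<exists>s. \<bar>s\<bar> \<le> \<bar>t\<bar> \<and> g (y + t *\<^sub>R b) - g y = t * D (y + s *\<^sub>R b)"
proof -
  have d: "\<And>u. ((\<lambda>t. g (y + t *\<^sub>R b)) has_real_derivative D (y + u *\<^sub>R b)) (at u)"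
    by (rule line_deriv_shift[OF der])
  consider "t = 0" | "t > 0" | "t < 0" by linarith
  then show ?thesis
  proof cases
    case 1 then show ?thesis by (intro exI[of _ 0]) simp
  next
    case 2
    from MVT2[OF 2, of "\<lambda>u. g (y + u *\<^sub>R b)" "\<lambda>u. D (y + u *\<^sub>R b)"] d
    obtain z where "0 < z" "z < t" "g (y + t *\<^sub>R b) - g (y + 0 *\<^sub>R b) = (t - 0) * D (y + z *\<^sub>R b)"
      by blast
    then show ?thesis by (intro exI[of _ z]) auto
  next
    case 3
    from MVT2[OF 3, of "\<lambda>u. g (y + u *\<^sub>R b)" "\<lambda>u. D (y + u *\<^sub>R b)"] d
    obtain z where "t < z" "z < 0" "g (y + 0 *\<^sub>R b) - g (y + t *\<^sub>R b) = (0 - t) * D (y + z *\<^sub>R b)"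
      by blast
    then show ?thesis by (intro exI[of _ z]) (auto simp: algebra_simps)
  qed
qed



lemma partials_has_derivative:
  fixes g :: "'a::euclidean_space \<Rightarrow> real" and D :: "'a \<Rightarrow> 'a \<Rightarrow> real"
  assumes der: "\<And>b y. b \<in> Basis \<Longrightarrow> ((\<lambda>t. g (y + t *\<^sub>R b)) has_real_derivative D b y) (at 0)"
    and cont: "\<And>b. b \<in> Basis \<Longrightarrow> isCont (D b) x"
  shows "(g has_derivative (\<lambda>h. \<Sum>b\<in>Basis. (h \<bullet> b) * D b x)) (at x)"
  unfolding has_derivative_at_alt
proof (intro conjI allI impI)
  show "bounded_linear (\<lambda>h. \<Sum>b\<in>Basis. (h \<bullet> b) * D b x)"
    by (intro bounded_linear_sum bounded_linear_mult_const bounded_linear_inner_left)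
next
  fix e :: real assume e: "e > 0"
  define e' where "e' = e / DIM('a)"
  have e': "e' > 0" using e by (simp add: e'_def)
  have "\<forall>\<^sub>F z in at x. \<forall>b\<in>Basis. dist (D b z) (D b x) < e'"
    using cont e' by (intro eventually_ball_finite) (auto simp: continuous_at tendsto_iff)
  then obtain d where d: "d > 0" "\<And>z. z \<noteq> x \<Longrightarrow> dist z x < d \<Longrightarrow> \<forall>b\<in>Basis. dist (D b z) (D b x) < e'"
    unfolding eventually_at by blast
  have dd: "\<bar>D b z - D b x\<bar> \<le> e'" if "b \<in> Basis" "norm (z - x) < d" for b z
    using d(2)[of z] that e' by (cases "z = x") (auto simp: dist_norm)
  have main: "\<bar>g (x + (\<Sum>b\<in>S. (h \<bullet> b) *\<^sub>R b)) - g x - (\<Sum>b\<in>S. (h \<bullet> b) * D b x)\<bar>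
      \<le> e' * (\<Sum>b\<in>S. \<bar>h \<bullet> b\<bar>)" if "S \<subseteq> Basis" "norm h < d" for S h
  proof -
    have "finite S" using that finite_Basis finite_subset by blast
    then show ?thesis using that(1)
    proof (induction S rule: finite_induct)
      case empty then show ?case by simp
    next
      case (insert c S)
      define y where "y = x + (\<Sum>b\<in>S. (h \<bullet> b) *\<^sub>R b)"
      have c: "c \<in> Basis" using insert by auto
      obtain s where s: "\<bar>s\<bar> \<le> \<bar>h \<bullet> c\<bar>" "g (y + (h \<bullet> c) *\<^sub>R c) - g y = (h \<bullet> c) * D c (y + s *\<^sub>R c)"
        using line_mvt[of g c "D c", OF der[OF c]] by blast
      have comp: "\<bar>(y + s *\<^sub>R c - x) \<bullet> b'\<bar> \<le> \<bar>h \<bullet> b'\<bar>" if b': "b' \<in> Basis" for b'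
      proof -
        have "(y + s *\<^sub>R c - x) \<bullet> b' = (\<Sum>b\<in>S. (h \<bullet> b) * (b \<bullet> b')) + s * (c \<bullet> b')"
          by (simp add: y_def inner_sum_left inner_add_left)
        also have "(\<Sum>b\<in>S. (h \<bullet> b) * (b \<bullet> b')) = (if b' \<in> S then h \<bullet> b' else 0)"
        proof -
          have "(\<Sum>b\<in>S. (h \<bullet> b) * (b \<bullet> b')) = (\<Sum>b\<in>S. if b = b' then h \<bullet> b' else 0)"
            using insert.prems b' by (intro sum.cong) (auto simp: inner_Basis)
          also have "\<dots> = (if b' \<in> S then h \<bullet> b' else 0)"
            using insert.hyps(1) by (simp add: sum.delta')
          finally show ?thesis .
        qed
        finally show ?thesis using s(1) insert.hyps(2) c b' by (auto simp: inner_Basis)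
      qed
      have "norm (y + s *\<^sub>R c - x) \<le> norm h" by (rule norm_le_componentwise) (use comp in auto)
      with that(2) have nrm: "norm (y + s *\<^sub>R c - x) < d" by simp
      have dc: "\<bar>D c (y + s *\<^sub>R c) - D c x\<bar> \<le> e'" using dd[OF c nrm] .
      have IH: "\<bar>g y - g x - (\<Sum>b\<in>S. (h \<bullet> b) * D b x)\<bar> \<le> e' * (\<Sum>b\<in>S. \<bar>h \<bullet> b\<bar>)"
        using insert by (simp add: y_def)
      have eq: "x + (\<Sum>b\<in>insert c S. (h \<bullet> b) *\<^sub>R b) = y + (h \<bullet> c) *\<^sub>R c"
        using insert.hyps by (simp add: y_def algebra_simps)
      have "\<bar>(h \<bullet> c) * D c (y + s *\<^sub>R c) - (h \<bullet> c) * D c x\<bar> \<le> e' * \<bar>h \<bullet> c\<bar>"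
        proof -
        have "\<bar>(h \<bullet> c) * D c (y + s *\<^sub>R c) - (h \<bullet> c) * D c x\<bar> = \<bar>h \<bullet> c\<bar> * \<bar>D c (y + s *\<^sub>R c) - D c x\<bar>"
          by (simp add: right_diff_distrib[symmetric] abs_mult)
        also have "\<dots> \<le> \<bar>h \<bullet> c\<bar> * e'" using dc by (intro mult_left_mono) auto
        finally show ?thesis by (simp add: mult.commute)
      qed
      moreover have G: "g (x + (\<Sum>b\<in>insert c S. (h \<bullet> b) *\<^sub>R b)) = g y + (h \<bullet> c) * D c (y + s *\<^sub>R c)"
        unfolding eq using s(2) by linarith
      ultimately show ?case using IH
        unfolding sum.insert[OF insert.hyps] distrib_left by arith
    qed
  qed
  show "\<exists>d>0. \<forall>y. norm (y - x) < d \<longrightarrow>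
          norm (g y - g x - (\<Sum>b\<in>Basis. ((y - x) \<bullet> b) * D b x)) \<le> e * norm (y - x)"
  proof (intro exI[of _ d] conjI allI impI)
    fix y assume y: "norm (y - x) < d"
    have A: "\<bar>g y - g x - (\<Sum>b\<in>Basis. ((y - x) \<bullet> b) * D b x)\<bar> \<le> e' * (\<Sum>b\<in>Basis. \<bar>(y - x) \<bullet> b\<bar>)"
      using main[OF order_refl y] by (simp add: euclidean_representation)
    have "(\<Sum>b\<in>Basis. \<bar>(y - x) \<bullet> b\<bar>) \<le> (\<Sum>b\<in>(Basis::'a set). norm (y - x))"
      by (intro sum_mono Basis_le_norm)
    also have "\<dots> = DIM('a) * norm (y - x)" by simp
    finally have "e' * (\<Sum>b\<in>Basis. \<bar>(y - x) \<bullet> b\<bar>) \<le> e' * (DIM('a) * norm (y - x))"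
      using e' by (intro mult_left_mono) auto
    also have "\<dots> = e * norm (y - x)" by (simp add: e'_def)
    finally show "norm (g y - g x - (\<Sum>b\<in>Basis. ((y - x) \<bullet> b) * D b x)) \<le> e * norm (y - x)"
      using A unfolding real_norm_def by linarith
  qed (use d in auto)
qed



lemma smooth_real_der:
  assumes "smooth_real g" "b \<in> Basis"
  shows "((\<lambda>t. g (y + t *\<^sub>R b)) has_real_derivative dir_deriv b g y) (at 0)"
proof -
  from assms have "(\<lambda>t. g (y + t *\<^sub>R b)) differentiable (at 0)"
    using assms(1)[unfolded smooth_real_def, rule_format, of "[]"] assms(2) by simp
  then obtain D where D: "((\<lambda>t. g (y + t *\<^sub>R b)) has_real_derivative D) (at 0)"
    unfolding real_differentiable_def by blast
  have "dir_deriv b g y = D" unfolding dir_deriv_def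
    using D DERIV_unique by blast
  with D show ?thesis by simp
qed

lemma smooth_real_cont:
  assumes "smooth_real g" "b \<in> Basis"
  shows "continuous_on UNIV (dir_deriv b g)"
proof -
  from assms have "continuous_on UNIV (iter_pd [b] g)"
    using assms(1)[unfolded smooth_real_def, rule_format, of "[b]"] assms(2) by simp
  then show ?thesis by simp
qed

lemma smooth_real_has_derivative:
  assumes "smooth_real g"
  shows "(g has_derivative (\<lambda>h. \<Sum>b\<in>Basis. (h \<bullet> b) * dir_deriv b g x)) (at x)"
proof (rule partials_has_derivative)
  fix b y assume b: "b \<in> (Basis::'a set)"
  show "((\<lambda>t. g (y + t *\<^sub>R b)) has_real_derivative dir_deriv b g y) (at 0)"
    by (rule smooth_real_der[OF assms b])
  show "isCont (dir_deriv b g) x"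
    using smooth_real_cont[OF assms b] continuous_on_eq_continuous_at[OF open_UNIV] by blast
qed

lemma sum_Basis_inner:
  fixes c :: "'a::euclidean_space \<Rightarrow> real"
  assumes i: "i \<in> Basis"
  shows "(\<Sum>j\<in>Basis. c j *\<^sub>R j) \<bullet> i = c i"
proof -
  have "(\<Sum>j\<in>Basis. c j *\<^sub>R j) \<bullet> i = (\<Sum>j\<in>Basis. c j * (j \<bullet> i))"
    by (simp add: inner_sum_left)
  also have "\<dots> = (\<Sum>j\<in>Basis. if j = i then c i else 0)"
    using i by (intro sum.cong) (auto simp: inner_Basis)
  also have "\<dots> = c i" using i by simp
  finally show ?thesis .
qed

definition smderiv :: "('a::euclidean_space \<Rightarrow> 'b::euclidean_space) \<Rightarrow> 'a \<Rightarrow> 'a \<Rightarrow> 'b" where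
  "smderiv f x h = (\<Sum>i\<in>Basis. (\<Sum>b\<in>Basis. (h \<bullet> b) * dir_deriv b (\<lambda>x. f x \<bullet> i) x) *\<^sub>R i)"

lemma smooth_map_has_derivative:
  assumes "smooth_map f"
  shows "(f has_derivative smderiv f x) (at x)"
proof (rule has_derivative_componentwise_within[THEN iffD2], intro ballI)
  fix i :: 'b assume i: "i \<in> Basis"
  have e: "(\<lambda>h. smderiv f x h \<bullet> i) = (\<lambda>h. \<Sum>b\<in>Basis. (h \<bullet> b) * dir_deriv b (\<lambda>x. f x \<bullet> i) x)"
    using i unfolding smderiv_def by (intro ext sum_Basis_inner)
  have "smooth_real (\<lambda>x. f x \<bullet> i)" using assms i unfolding smooth_map_def by blast
  then have "((\<lambda>x. f x \<bullet> i) has_derivative (\<lambda>h. \<Sum>b\<in>Basis. (h \<bullet> b) * dir_deriv b (\<lambda>x. f x \<bullet> i) x)) (at x)"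
    by (rule smooth_real_has_derivative)
  then show "((\<lambda>x. f x \<bullet> i) has_derivative (\<lambda>h. smderiv f x h \<bullet> i)) (at x)"
    unfolding e .
qed

lemma smooth_map_entry:
  fixes g :: "real^'n \<Rightarrow> real^'m"
  assumes "smooth_map g"
  shows "matrix (frechet_derivative g (at x)) $ i $ j
     = (\<Sum>b\<in>Basis. (axis j 1 \<bullet> b) * dir_deriv b (\<lambda>x. g x \<bullet> axis i 1) x)"
proof -
  have "frechet_derivative g (at x) = smderiv g x"
    using frechet_derivative_at[OF smooth_map_has_derivative[OF assms]] by simp
  moreover have "smderiv g x h $ i = (\<Sum>b\<in>Basis. (h \<bullet> b) * dir_deriv b (\<lambda>x. g x \<bullet> axis i 1) x)" for h
    unfolding cart_eq_inner_axis[of _ i] smderiv_def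
    by (rule sum_Basis_inner) (auto simp: Basis_vec_def)
  ultimately show ?thesis by (simp add: matrix_def)
qed

lemma smooth_map_det_cont:
  fixes g :: "real^'n \<Rightarrow> real^'n"
  assumes "smooth_map g"
  shows "continuous_on UNIV (\<lambda>x. det (matrix (frechet_derivative g (at x))))"
proof -
  have c: "continuous_on UNIV (\<lambda>x. matrix (frechet_derivative g (at x)) $ i $ j)" for i j
    unfolding smooth_map_entry[OF assms]
    using assms unfolding smooth_map_def
    by (intro continuous_intros) (auto intro: smooth_real_cont)
  show ?thesis unfolding det_def
    by (intro continuous_intros c)
qed

lemma det_nonzero:
  fixes f g :: "real^'n \<Rightarrow> real^'n"
  assumes "smooth_map f" "smooth_map g" "\<And>x. f (g x) = x"
  shows "det (matrix (frechet_derivative g (at x))) \<noteq> 0"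
proof -
  have dg: "(g has_derivative smderiv g x) (at x)" by (rule smooth_map_has_derivative[OF assms(2)])
  have df: "(f has_derivative smderiv f (g x)) (at (g x))" by (rule smooth_map_has_derivative[OF assms(1)])
  have "((f \<circ> g) has_derivative (smderiv f (g x) \<circ> smderiv g x)) (at x)"
    by (rule diff_chain_at[OF dg df])
  moreover have "f \<circ> g = id" using assms(3) by auto
  ultimately have "(id has_derivative (smderiv f (g x) \<circ> smderiv g x)) (at x)" by simp
  then have eq: "smderiv f (g x) \<circ> smderiv g x = id"
    using has_derivative_unique[OF _ has_derivative_id] by blast
  have lf: "linear (smderiv f (g x))" using df has_derivative_linear by blast
  have lg: "linear (smderiv g x)" using dg has_derivative_linear by blast
  have "det (matrix (smderiv f (g x))) * det (matrix (smderiv g x)) = 1"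
  proof -
    have "matrix (smderiv f (g x)) ** matrix (smderiv g x) = mat 1"
      using matrix_compose[OF lg lf] eq by (simp add: matrix_id_mat_1)
    then show ?thesis by (metis det_mul det_I)
  qed
  moreover have "frechet_derivative g (at x) = smderiv g x" using frechet_derivative_at[OF dg] by simp
  ultimately show ?thesis by auto
qed



lemma pt_identity:
  fixes a q Z1 Z2 s1 s2 t :: real
  assumes "a > 0" "q > 0" "Z1 > 0" "Z2 > 0" "s1 > 0" "s2 > 0" "s1 + s2 = 1" "t > 0"
  shows "(1/s2) * ((a / Z1) * (s2 * (Z2 * q) * t / (s1 * a + s2 * (Z2 * q) * t))^2)
       + (1/s1) * (q * (s1 * a / (s1 * a + s2 * (Z2 * q) * t))^2)
       - inverse (s2 * inverse (a / Z1) + (1 - s2) * inverse q)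
     = (a * (Z2 * q) * (s2 * (Z2 * q)) * (s1 * a) * (Z2 / Z1)
         / ((s1 * a + s2 * (Z2 * q) * t)^2 * (s2 * (Z2 * q) * Z1 + s1 * a * Z2))) * (t - Z1 / Z2)^2"
proof -
  have s1: "1 - s2 = s1" using assms by simp
  have p: "s1 * a + s2 * (Z2 * q) * t > 0" using assms by (intro add_pos_pos mult_pos_pos) auto
  have p2: "s2 * (Z2 * q) * Z1 + s1 * a * Z2 > 0" using assms by (intro add_pos_pos mult_pos_pos) auto
  have inv: "inverse (s2 * inverse (a / Z1) + s1 * inverse q) = a * q / (s2 * Z1 * q + s1 * a)"
    using assms by (simp add: field_simps)
  have p3: "s2 * Z1 * q + s1 * a > 0" using assms by (intro add_pos_pos mult_pos_pos) auto
  show ?thesis unfolding s1 inv using assms p p2 p3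
    apply (simp add: divide_simps power2_eq_square)
    apply (simp add: algebra_simps power2_eq_square)
    done
qed


lemma frac_le1:
  fixes x y :: real assumes "x \<ge> 0" "y > 0" shows "x / (y + x) \<le> 1" "0 \<le> x / (y + x)"
  using assms by (auto simp: divide_simps)

lemma bound1:
  fixes a q Z1 Z2 s1 s2 t :: real
  assumes "a > 0" "q > 0" "Z1 > 0" "Z2 > 0" "s1 > 0" "s2 > 0" "t > 0"
  shows "(a / Z1) * (s2 * (Z2 * q) * t / (s1 * a + s2 * (Z2 * q) * t))^2 \<le> (s2 * Z2 * t / (s1 * Z1)) * q"
proof -
  define u where "u = s2 * (Z2 * q) * t"
  define v where "v = s1 * a"
  have u: "u > 0" "v > 0" using assms by (auto simp: u_def v_def)
  have f: "u / (v + u) \<le> 1" "0 \<le> u / (v + u)" using frac_le1[of u v] u by auto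
  have "(u / (v + u))^2 \<le> u / (v + u)" using f mult_left_le[of "u / (v + u)" "u / (v + u)"] by (simp add: power2_eq_square)
  also have "\<dots> \<le> u / v" using u by (intro divide_left_mono) auto
  finally have "(a / Z1) * (u / (v + u))^2 \<le> (a / Z1) * (u / v)"
    using assms by (intro mult_left_mono) auto
  also have "\<dots> = (s2 * Z2 * t / (s1 * Z1)) * q" using assms by (simp add: u_def v_def field_simps)
  finally show ?thesis by (simp add: u_def v_def)
qed

lemma bound2:
  fixes a q Z1 Z2 s1 s2 t :: real
  assumes "a > 0" "q > 0" "Z2 > 0" "s1 > 0" "s2 > 0" "t > 0"
  shows "q * (s1 * a / (s1 * a + s2 * (Z2 * q) * t))^2 \<le> q"
proof -
  define u where "u = s2 * (Z2 * q) * t"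
  define v where "v = s1 * a"
  have u: "u > 0" "v > 0" using assms by (auto simp: u_def v_def)
  have f: "v / (u + v) \<le> 1" "0 \<le> v / (u + v)" using frac_le1[of v u] u by auto
  have "(v / (v + u))^2 \<le> 1" using f by (simp add: add.commute power_le_one)
  then have "q * (v / (v + u))^2 \<le> q * 1" using assms by (intro mult_left_mono) auto
  then show ?thesis by (simp add: u_def v_def)
qed

lemma bound3:
  fixes a q Z1 s1 s2 :: real
  assumes "a > 0" "q > 0" "Z1 > 0" "s1 > 0" "s2 > 0" "s1 + s2 = 1"
  shows "0 < inverse (s2 * inverse (a / Z1) + (1 - s2) * inverse q)"
    "inverse (s2 * inverse (a / Z1) + (1 - s2) * inverse q) \<le> q / s1"
proof -
  have s1: "1 - s2 = s1" using assms by simp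
  have e: "inverse (s2 * inverse (a / Z1) + (1 - s2) * inverse q) = a * q / (s2 * Z1 * q + s1 * a)"
    unfolding s1 using assms by (simp add: field_simps)
  show "0 < inverse (s2 * inverse (a / Z1) + (1 - s2) * inverse q)" unfolding e
    using assms by (intro divide_pos_pos mult_pos_pos add_pos_pos) auto
  have "a * q / (s2 * Z1 * q + s1 * a) \<le> a * q / (s1 * a)"
    using assms by (intro divide_left_mono mult_pos_pos) (auto intro!: mult_pos_pos add_pos_pos)
  also have "\<dots> = q / s1" using assms by simp
  finally show "inverse (s2 * inverse (a / Z1) + (1 - s2) * inverse q) \<le> q / s1" unfolding e .
qed


lemma key_integral:
  fixes a q :: "'a::euclidean_space \<Rightarrow> real"
  assumes am: "a \<in> borel_measurable lborel" and qm: "q \<in> borel_measurable lborel"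
    and qi: "integrable lborel q" and apos: "\<And>x. a x > 0" and qpos: "\<And>x. q x > 0"
    and Z: "Z1 > 0" "Z2 > 0" and s: "s1 > 0" "s2 > 0" "s1 + s2 = 1" and t: "t > 0"
  shows "harmonic_div s2 (\<lambda>x. a x / Z1) q - bridge_G s1 s2 (\<lambda>x. a x / Z1) q a (\<lambda>x. Z2 * q x) t
         = (\<integral>x. (a x * (Z2 * q x) * (s2 * (Z2 * q x)) * (s1 * a x) * (Z2 / Z1)
         / ((s1 * a x + s2 * (Z2 * q x) * t)^2 * (s2 * (Z2 * q x) * Z1 + s1 * a x * Z2))) * (t - Z1 / Z2)^2 \<partial>lborel)"
    and "harmonic_div s2 (\<lambda>x. a x / Z1) q < 1"
    and "integrable lborel (\<lambda>x. (a x * (Z2 * q x) * (s2 * (Z2 * q x)) * (s1 * a x) * (Z2 / Z1)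
         / ((s1 * a x + s2 * (Z2 * q x) * t)^2 * (s2 * (Z2 * q x) * Z1 + s1 * a x * Z2))) * (t - Z1 / Z2)^2)"
proof -
  define f1 where "f1 x = (a x / Z1) * (s2 * (Z2 * q x) * t / (s1 * a x + s2 * (Z2 * q x) * t))^2" for x
  define f2 where "f2 x = q x * (s1 * a x / (s1 * a x + s2 * (Z2 * q x) * t))^2" for x
  define h where "h x = inverse (s2 * inverse (a x / Z1) + (1 - s2) * inverse (q x))" for x
  define K where "K x = (a x * (Z2 * q x) * (s2 * (Z2 * q x)) * (s1 * a x) * (Z2 / Z1)
         / ((s1 * a x + s2 * (Z2 * q x) * t)^2 * (s2 * (Z2 * q x) * Z1 + s1 * a x * Z2))) * (t - Z1 / Z2)^2" for x
  have f1m: "f1 \<in> borel_measurable lborel" unfolding f1_def using am qm by measurable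
  have f2m: "f2 \<in> borel_measurable lborel" unfolding f2_def using am qm by measurable
  have hm: "h \<in> borel_measurable lborel" unfolding h_def using am qm by measurable
  have f1i: "integrable lborel f1"
  proof (rule Bochner_Integration.integrable_bound[OF integrable_mult_right[OF qi, of "s2 * Z2 * t / (s1 * Z1)"] f1m])
    show "AE x in lborel. norm (f1 x) \<le> norm (s2 * Z2 * t / (s1 * Z1) * q x)"
    proof (intro AE_I2)
      fix x
      have "0 \<le> f1 x" unfolding f1_def using apos[of x] Z by simp
      moreover have "f1 x \<le> s2 * Z2 * t / (s1 * Z1) * q x"
        unfolding f1_def by (rule bound1[OF apos[of x] qpos[of x] Z s(1,2) t])
      moreover have "0 \<le> s2 * Z2 * t / (s1 * Z1) * q x" using qpos[of x] Z s t by simp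
      ultimately show "norm (f1 x) \<le> norm (s2 * Z2 * t / (s1 * Z1) * q x)"
        unfolding real_norm_def by linarith
    qed
  qed
  have f2i: "integrable lborel f2"
  proof (rule Bochner_Integration.integrable_bound[OF qi f2m])
    show "AE x in lborel. norm (f2 x) \<le> norm (q x)"
    proof (intro AE_I2)
      fix x
      have "0 \<le> f2 x" unfolding f2_def using qpos[of x] by simp
      moreover have "f2 x \<le> q x"
        unfolding f2_def by (rule bound2[OF apos[of x] qpos[of x] Z(2) s(1,2) t])
      ultimately show "norm (f2 x) \<le> norm (q x)" using qpos[of x] by simp
    qed
  qed
  have hi: "integrable lborel h"
  proof (rule Bochner_Integration.integrable_bound[OF integrable_mult_right[OF qi, of "1 / s1"] hm])
    show "AE x in lborel. norm (h x) \<le> norm (1 / s1 * q x)"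
    proof (intro AE_I2)
      fix x
      have "0 < h x" "h x \<le> q x / s1"
        unfolding h_def using bound3[OF apos[of x] qpos[of x] Z(1) s] by auto
      then show "norm (h x) \<le> norm (1 / s1 * q x)" using qpos[of x] s by simp
    qed
  qed
  have FK: "(1/s2) * f1 x + (1/s1) * f2 x - h x = K x" for x
    unfolding f1_def f2_def h_def K_def by (rule pt_identity[OF apos[of x] qpos[of x] Z s t])
  have Ki: "integrable lborel K"
  proof -
    have "integrable lborel (\<lambda>x. (1/s2) * f1 x + (1/s1) * f2 x - h x)"
      using f1i f2i hi by auto
    then show ?thesis using FK by simp
  qed
  then show "integrable lborel (\<lambda>x. (a x * (Z2 * q x) * (s2 * (Z2 * q x)) * (s1 * a x) * (Z2 / Z1)
         / ((s1 * a x + s2 * (Z2 * q x) * t)^2 * (s2 * (Z2 * q x) * Z1 + s1 * a x * Z2))) * (t - Z1 / Z2)^2)"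
    unfolding K_def[abs_def] .
  have G: "bridge_G s1 s2 (\<lambda>x. a x / Z1) q a (\<lambda>x. Z2 * q x) t = 1 - (1/s2) * integral\<^sup>L lborel f1 - (1/s1) * integral\<^sup>L lborel f2"
    unfolding bridge_G_def f1_def f2_def ..
  have H: "harmonic_div s2 (\<lambda>x. a x / Z1) q = 1 - integral\<^sup>L lborel h"
    unfolding harmonic_div_def h_def ..
  have "integral\<^sup>L lborel K = integral\<^sup>L lborel (\<lambda>x. (1/s2) * f1 x + (1/s1) * f2 x - h x)"
    using FK by simp
  also have "\<dots> = (1/s2) * integral\<^sup>L lborel f1 + (1/s1) * integral\<^sup>L lborel f2 - integral\<^sup>L lborel h"
    using f1i f2i hi by simp
  finally show "harmonic_div s2 (\<lambda>x. a x / Z1) q - bridge_G s1 s2 (\<lambda>x. a x / Z1) q a (\<lambda>x. Z2 * q x) t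
         = (\<integral>x. (a x * (Z2 * q x) * (s2 * (Z2 * q x)) * (s1 * a x) * (Z2 / Z1)
         / ((s1 * a x + s2 * (Z2 * q x) * t)^2 * (s2 * (Z2 * q x) * Z1 + s1 * a x * Z2))) * (t - Z1 / Z2)^2 \<partial>lborel)"
    unfolding G H K_def[symmetric] by simp
  have hpos: "h x > 0" for x unfolding h_def using bound3(1)[OF apos[of x] qpos[of x] Z(1) s] .
  have "integral\<^sup>L lborel h \<noteq> 0"
  proof
    assume "integral\<^sup>L lborel h = 0"
    then have "AE x in lborel. h x = 0"
      using integral_nonneg_eq_0_iff_AE[OF hi] hpos by (simp add: less_imp_le)
    then have "AE (x::'a) in lborel. False"
    proof (rule eventually_mono)
      fix x assume "h x = 0" then show False using hpos[of x] by simp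
    qed
    then show False using ae_filter_eq_bot_iff[of "lborel::'a measure"] trivial_limit_def by force
  qed
  moreover have "integral\<^sup>L lborel h \<ge> 0" using hpos by (intro integral_nonneg_AE) (simp add: less_imp_le)
  ultimately show "harmonic_div s2 (\<lambda>x. a x / Z1) q < 1" unfolding H by simp
qed


lemma pos_integral_pos:
  fixes K :: "'a::euclidean_space \<Rightarrow> real"
  assumes "integrable lborel K" "\<And>x. K x > 0"
  shows "integral\<^sup>L lborel K > 0"
proof -
  have "integral\<^sup>L lborel K \<noteq> 0"
  proof
    assume "integral\<^sup>L lborel K = 0"
    then have "AE x in lborel. K x = 0"
      using integral_nonneg_eq_0_iff_AE[OF assms(1)] assms(2) by (simp add: less_imp_le)
    then have "AE (x::'a) in lborel. False"
    proof (rule eventually_mono)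
      fix x assume "K x = 0" then show False using assms(2)[of x] by simp
    qed
    then show False using ae_filter_eq_bot_iff[of "lborel::'a measure"] trivial_limit_def by force
  qed
  moreover have "integral\<^sup>L lborel K \<ge> 0" using assms(2) by (intro integral_nonneg_AE) (simp add: less_imp_le)
  ultimately show ?thesis by simp
qed

lemma key2:
  fixes a q :: "'a::euclidean_space \<Rightarrow> real"
  assumes am: "a \<in> borel_measurable lborel" and qm: "q \<in> borel_measurable lborel"
    and qi: "integrable lborel q" and apos: "\<And>x. a x > 0" and qpos: "\<And>x. q x > 0"
    and Z: "Z1 > 0" "Z2 > 0" and s: "s1 > 0" "s2 > 0" "s1 + s2 = 1" and t: "t > 0"
  shows "bridge_G s1 s2 (\<lambda>x. a x / Z1) q a (\<lambda>x. Z2 * q x) t \<le> harmonic_div s2 (\<lambda>x. a x / Z1) q"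
    and "bridge_G s1 s2 (\<lambda>x. a x / Z1) q a (\<lambda>x. Z2 * q x) t = harmonic_div s2 (\<lambda>x. a x / Z1) q
           \<longleftrightarrow> t = Z1 / Z2"
proof -
  define c where "c x = (a x * (Z2 * q x) * (s2 * (Z2 * q x)) * (s1 * a x) * (Z2 / Z1)
         / ((s1 * a x + s2 * (Z2 * q x) * t)^2 * (s2 * (Z2 * q x) * Z1 + s1 * a x * Z2)))" for x
  have cpos: "c x > 0" for x
    unfolding c_def using apos[of x] qpos[of x] Z s t
    by (intro divide_pos_pos mult_pos_pos add_pos_pos zero_less_power) auto
  note D = key_integral(1,3)[OF am qm qi apos qpos Z s t, folded c_def]
  have nn: "integral\<^sup>L lborel (\<lambda>x. c x * (t - Z1 / Z2)^2) \<ge> 0"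
    using cpos by (intro integral_nonneg_AE) (simp add: less_imp_le)
  then show "bridge_G s1 s2 (\<lambda>x. a x / Z1) q a (\<lambda>x. Z2 * q x) t \<le> harmonic_div s2 (\<lambda>x. a x / Z1) q"
    using D(1) by linarith
  show "bridge_G s1 s2 (\<lambda>x. a x / Z1) q a (\<lambda>x. Z2 * q x) t = harmonic_div s2 (\<lambda>x. a x / Z1) q
           \<longleftrightarrow> t = Z1 / Z2"
  proof
    assume eq: "bridge_G s1 s2 (\<lambda>x. a x / Z1) q a (\<lambda>x. Z2 * q x) t = harmonic_div s2 (\<lambda>x. a x / Z1) q"
    show "t = Z1 / Z2"
    proof (rule ccontr)
      assume ne: "t \<noteq> Z1 / Z2"
      have "integral\<^sup>L lborel (\<lambda>x. c x * (t - Z1 / Z2)^2) > 0"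
        using D(2) cpos ne by (intro pos_integral_pos) auto
      then show False using D(1) eq by linarith
    qed
  next
    assume "t = Z1 / Z2"
    then show "bridge_G s1 s2 (\<lambda>x. a x / Z1) q a (\<lambda>x. Z2 * q x) t = harmonic_div s2 (\<lambda>x. a x / Z1) q"
      using D(1) by simp
  qed
qed


theorem proposition3:
  fixes q1 q2 :: "real^'d \<Rightarrow> real" and Z1 Z2 :: real
    and T Tinv :: "real^'l \<Rightarrow> real^'d \<Rightarrow> real^'d"
    and n1 n2 :: nat and rstar :: real and phistar :: "real^'l"
  defines "n \<equiv> n1 + n2"
  defines "s1 \<equiv> real n1 / real n"
  defines "s2 \<equiv> real n2 / real n"
  defines "r \<equiv> Z1 / Z2"
  defines "tq1 \<equiv> (\<lambda>x. Z1 * q1 x)"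
  defines "tq2 \<equiv> (\<lambda>x. Z2 * q2 x)"
  defines "tq1phi \<equiv> (\<lambda>\<phi> x. tq1 (Tinv \<phi> x) * \<bar>det (matrix (frechet_derivative (Tinv \<phi>) (at x)))\<bar>)"
  defines "q1phi \<equiv> (\<lambda>\<phi> x. tq1phi \<phi> x / Z1)"
  defines "G \<equiv> (\<lambda>rt \<phi>. bridge_G s1 s2 (q1phi \<phi>) q2 (tq1phi \<phi>) tq2 rt)"
  defines "H \<equiv> (\<lambda>\<phi>. harmonic_div s2 (q1phi \<phi>) q2)"
  assumes q1_meas: "q1 \<in> borel_measurable lborel" and q1_pos: "\<forall>x. q1 x > 0"
    and q1_int: "integrable lborel q1" and q1_norm: "(\<integral>x. q1 x \<partial>lborel) = 1"
    and q2_meas: "q2 \<in> borel_measurable lborel" and q2_pos: "\<forall>x. q2 x > 0"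
    and q2_int: "integrable lborel q2" and q2_norm: "(\<integral>x. q2 x \<partial>lborel) = 1"
    and Z_pos: "Z1 > 0" "Z2 > 0"
    and T_smooth: "\<forall>\<phi>. smooth_map (T \<phi>) \<and> smooth_map (Tinv \<phi>)"
    and T_inv: "\<forall>\<phi> x. T \<phi> (Tinv \<phi> x) = x \<and> Tinv \<phi> (T \<phi> x) = x"
    and n_pos: "n1 \<ge> 1" "n2 \<ge> 1"
    and phistar_min: "\<forall>\<phi>. (SUP rt\<in>{0<..}. G rt phistar) \<le> (SUP rt\<in>{0<..}. G rt \<phi>)"
    and rstar_pos: "rstar > 0"
    and rstar_max: "G rstar phistar = (SUP rt\<in>{0<..}. G rt phistar)"
  shows "rstar = r \<and> (\<forall>\<phi>. G rstar \<phi> = H \<phi>) \<and> (\<forall>\<phi>. H phistar \<le> H \<phi>) \<and>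
         (\<forall>\<phi>. 1 / (real n * s1 * s2) * (inverse (1 - H phistar) - 1)
               \<le> 1 / (real n * s1 * s2) * (inverse (1 - H \<phi>) - 1))"
  proof -
  have n1: "real n1 > 0" "real n2 > 0" using n_pos by auto
  have nn: "real n > 0" using n_pos by (simp add: n_def)
  have rn: "real n = real n1 + real n2" by (simp add: n_def)
  have s12: "s1 + s2 = 1" unfolding s1_def s2_def add_divide_distrib[symmetric] rn[symmetric]
    using nn by simp
  have s: "s1 > 0" "s2 > 0" "s1 + s2 = 1"
    using n1 nn s12 by (auto simp: s1_def s2_def)
  have Zp: "Z1 > 0" "Z2 > 0" using Z_pos by auto
  have q2pos: "\<And>x. q2 x > 0" using q2_pos by auto
  have q1b: "q1 \<in> borel_measurable borel" using q1_meas by simp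
  have apos: "tq1phi \<phi> x > 0" for \<phi> x
  proof -
    have "det (matrix (frechet_derivative (Tinv \<phi>) (at x))) \<noteq> 0"
      using T_smooth T_inv by (intro det_nonzero[of "T \<phi>"]) auto
    then show ?thesis unfolding tq1phi_def tq1_def using Z_pos q1_pos by simp
  qed
  have am: "tq1phi \<phi> \<in> borel_measurable lborel" for \<phi>
  proof -
    have sm: "smooth_map (Tinv \<phi>)" using T_smooth by auto
    have "continuous_on UNIV (Tinv \<phi>)"
      using smooth_map_has_derivative[OF sm] has_derivative_continuous
      by (intro continuous_at_imp_continuous_on) blast
    then have tb: "Tinv \<phi> \<in> borel_measurable borel" by (rule borel_measurable_continuous_onI)
    have db: "(\<lambda>x. det (matrix (frechet_derivative (Tinv \<phi>) (at x)))) \<in> borel_measurable borel"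
      by (rule borel_measurable_continuous_onI[OF smooth_map_det_cont[OF sm]])
    have "(\<lambda>x. q1 (Tinv \<phi> x)) \<in> borel_measurable borel"
      using measurable_compose[OF tb q1b] by (simp add: o_def)
    then have "tq1phi \<phi> \<in> borel_measurable borel" unfolding tq1phi_def tq1_def
      using db by measurable
    then show ?thesis by simp
  qed
  have Geq: "G rt \<phi> = bridge_G s1 s2 (\<lambda>x. tq1phi \<phi> x / Z1) q2 (tq1phi \<phi>) (\<lambda>x. Z2 * q2 x) rt" for rt \<phi>
    unfolding G_def q1phi_def tq2_def ..
  have Heq: "H \<phi> = harmonic_div s2 (\<lambda>x. tq1phi \<phi> x / Z1) q2" for \<phi>
    unfolding H_def q1phi_def ..
  have le: "G rt \<phi> \<le> H \<phi>" if "rt > 0" for rt \<phi>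
    unfolding Geq Heq by (rule key2(1)[OF am q2_meas q2_int apos q2pos Zp s that])
  have eqv: "G rt \<phi> = H \<phi> \<longleftrightarrow> rt = r" if "rt > 0" for rt \<phi>
    unfolding Geq Heq r_def by (rule key2(2)[OF am q2_meas q2_int apos q2pos Zp s that])
  have Hlt: "H \<phi> < 1" for \<phi>
    unfolding Heq by (rule key_integral(2)[OF am q2_meas q2_int apos q2pos Zp s, of 1]) simp
  have rpos: "r > 0" unfolding r_def using Zp by simp
  have sup: "(SUP rt\<in>{0<..}. G rt \<phi>) = H \<phi>" for \<phi>
  proof (rule cSup_eq_maximum)
    show "H \<phi> \<in> (\<lambda>rt. G rt \<phi>) ` {0<..}" using eqv[OF rpos, of \<phi>] rpos by force
    show "\<And>x. x \<in> (\<lambda>rt. G rt \<phi>) ` {0<..} \<Longrightarrow> x \<le> H \<phi>" using le by auto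
  qed
  have r1: "rstar = r" using rstar_max sup eqv[OF rstar_pos] by simp
  have r2: "\<forall>\<phi>. G rstar \<phi> = H \<phi>" using eqv[OF rstar_pos] r1 by simp
  have r3: "\<forall>\<phi>. H phistar \<le> H \<phi>" using phistar_min sup by simp
  have r4: "1 / (real n * s1 * s2) * (inverse (1 - H phistar) - 1)
               \<le> 1 / (real n * s1 * s2) * (inverse (1 - H \<phi>) - 1)" for \<phi>
  proof -
    have "inverse (1 - H phistar) \<le> inverse (1 - H \<phi>)"
      using r3 Hlt[of \<phi>] by (intro le_imp_inverse_le) auto
    moreover have "1 / (real n * s1 * s2) \<ge> 0" using nn s by simp
    ultimately show ?thesis by (intro mult_left_mono) auto
  qed
  show ?thesis using r1 r2 r3 r4 by blast
qed

end
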